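(* Let $p\ge1$, $\nu>p$, $\epsilon>0$, $\gamma>0$, let $B$ be a $p\times p$ symmetric positive definite matrix and $S$ a $p\times p$ symmetric positive semidefinite matrix. Let $M=\{X\in\mathbb{S}^p: X-\epsilon I\succeq0\}$ and let $N$ be as in the context. Define, for $X\in\mathbb{S}^p_{++}$ and $Y\in\mathbb{R}^{p\times p}$, $$P_\gamma(X,Y)=-(\nu-p)\log(\det X)+\mathrm{tr}((B^{-1}+S)X)+\frac{\gamma}{2}\|X-Y\|_F^2.$$ Then the problem $\min\{P_\gamma(X,Y):(X,Y)\in M\times N\}$ has a unique minimizer.
   Context: $\mathbb{S}^p$ ($\mathbb{S}^p_{++}$) is the set of $p\times p$ symmetric (symmetric positive definite) matrices; $\|\cdot\|_F$ is the Frobenius norm. Each node $i\in\{1,\dots,p\}$ has a type $s_i$ and a neighbor set $\mathcal{N}_i\subseteq\{1,\dots,p\}\setminus\{i\}$, and $N=\{X\in\mathbb{R}^{p\times p}:\ X_{ii}=X_{jj}\text{ whenever } s_i=s_j;\ X_{ij}=X_{kl}\text{ whenever } j\in\mathcal{N}_i,\ l\in\mathcal{N}_k,\ s_i=s_k,\ s_j=s_l;\ X_{ij}=0\text{ whenever } i\neq j \text{ and } j\notin\mathcal{N}_i\}$. *)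

theory Defs
  imports "HOL-Analysis.Analysis"
begin

text \<open>p x p real matrices are modelled as real^'n^'n with 'n a finite type, p = CARD('n).\<close>

definition sym_mat :: "real^'n^'n \<Rightarrow> bool" where
  "sym_mat A \<longleftrightarrow> transpose A = A"

definition psd_mat :: "real^'n^'n \<Rightarrow> bool" where
  "psd_mat A \<longleftrightarrow> sym_mat A \<and> (\<forall>x. 0 \<le> x \<bullet> (A *v x))"

definition pd_mat :: "real^'n^'n \<Rightarrow> bool" where
  "pd_mat A \<longleftrightarrow> sym_mat A \<and> (\<forall>x. x \<noteq> 0 \<longrightarrow> 0 < x \<bullet> (A *v x))"

definition frob_norm :: "real^'n^'n \<Rightarrow> real" where
  "frob_norm A = sqrt (\<Sum>i\<in>UNIV. \<Sum>j\<in>UNIV. (A $ i $ j)\<^sup>2)"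

definition M_set :: "real \<Rightarrow> (real^'n^'n) set" where
  "M_set eps = {X. sym_mat X \<and> psd_mat (X - eps *\<^sub>R mat 1)}"

text \<open>The structured set N given node types s and neighbour sets Nb.\<close>
definition N_set :: "('n \<Rightarrow> 't) \<Rightarrow> ('n \<Rightarrow> 'n set) \<Rightarrow> (real^'n^'n) set" where
  "N_set s Nb = {X.
      (\<forall>i j. s i = s j \<longrightarrow> X $ i $ i = X $ j $ j) \<and>
      (\<forall>i j k l. j \<in> Nb i \<and> l \<in> Nb k \<and> s i = s k \<and> s j = s l \<longrightarrow> (X $ i $ j) = (X $ k $ l)) \<and>
      (\<forall>i j. i \<noteq> j \<and> j \<notin> Nb i \<longrightarrow> X $ i $ j = 0)}"

definition P_gamma :: "real \<Rightarrow> real \<Rightarrow> real^'n^'n \<Rightarrow> real^'n^'n \<Rightarrow> real^'n^'n \<Rightarrow> real^'n^'n \<Rightarrow> real" where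
  "P_gamma nu gamma B S X Y =
     - (nu - real CARD('n)) * ln (det X) + trace ((matrix_inv B + S) ** X)
     + gamma / 2 * (frob_norm (X - Y))\<^sup>2"

end

theory Submission
  imports Defs
begin

lemma sym_dot:
  fixes A :: "real^'n^'n"
  assumes "sym_mat A"
  shows "x \<bullet> (A *v y) = (A *v x) \<bullet> y"
proof -
  have "x \<bullet> (A *v y) = (x v* A) \<bullet> y" by (simp add: dot_lmul_matrix)
  also have "x v* A = transpose A *v x" by (simp add: transpose_matrix_vector)
  also have "transpose A = A" using assms sym_mat_def by auto
  finally show ?thesis .
qed

lemma quad_neg_contra:
  fixes c K :: real
  assumes "\<forall>t. 2*t*c \<le> t^2*K"
  shows "c = 0"
proof (rule ccontr)
  assume c: "c \<noteq> 0"
  define D where "D = \<bar>K\<bar>+1"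
  have D: "D > 0" "\<bar>K\<bar> < D" unfolding D_def by auto
  define t where "t = c/D"
  have t0: "t \<noteq> 0" using c D by (simp add: t_def)
  have "2*t*c \<le> t^2*K" using assms by auto
  moreover have "t^2*K \<le> t^2*\<bar>K\<bar>" by (simp add: mult_left_mono)
  moreover have "t^2*\<bar>K\<bar> < t^2*D" using t0 D by simp
  moreover have "t^2*D = t*c" using D by (simp add: t_def power2_eq_square)
  moreover have "t*c > 0" using c D by (auto simp: t_def zero_less_divide_iff zero_less_mult_iff linorder_neq_iff)
  ultimately show False by linarith
qed

lemma eig_step:
  fixes A :: "real^'n^'n"
  assumes sym: "sym_mat A" and fin: "finite E" and cardE: "card E < CARD('n)"
    and eig: "\<forall>e\<in>E. \<exists>l. A *v e = l *\<^sub>R e"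
  shows "\<exists>v. norm v = 1 \<and> (\<forall>e\<in>E. e \<bullet> v = 0) \<and> (\<exists>l. A *v v = l *\<^sub>R v)"
proof -
  define V where "V = {x::real^'n. \<forall>e\<in>E. e \<bullet> x = 0}"
  define S where "S = V \<inter> sphere 0 1"
  define f where "f = (\<lambda>x::real^'n. x \<bullet> (A *v x))"
  have Vsub: "x + t *\<^sub>R w \<in> V" if "x \<in> V" "w \<in> V" for x w t
    using that by (simp add: V_def inner_add_right)
  have Vscale: "t *\<^sub>R w \<in> V" if "w \<in> V" for w t
    using that by (simp add: V_def)
  have "dim E < DIM(real^'n)" using dim_le_card'[OF fin] cardE by simp
  then obtain x where x0: "x \<noteq> 0" and xo: "\<And>y. y \<in> span E \<Longrightarrow> orthogonal x y"
    using orthogonal_to_subspace_exists by blast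
  have "x \<in> V" unfolding V_def using xo span_base by (force simp: orthogonal_def inner_commute)
  hence "(1/norm x) *\<^sub>R x \<in> S" using x0 Vscale by (simp add: S_def)
  hence Sne: "S \<noteq> {}" by auto
  have "closed V"
  proof -
    have "V = (\<Inter>e\<in>E. {x. e \<bullet> x = 0})" by (auto simp: V_def)
    thus ?thesis by (auto intro!: closed_INT closed_hyperplane)
  qed
  hence "compact S" unfolding S_def by (intro closed_Int_compact compact_sphere)
  moreover have "continuous_on S f" unfolding f_def by (intro continuous_intros)
  ultimately obtain v where vS: "v \<in> S" and vmax: "\<And>y. y \<in> S \<Longrightarrow> f y \<le> f v"
    using continuous_attains_sup[OF _ Sne] by blast
  have vV: "v \<in> V" and nv: "norm v = 1" using vS by (auto simp: S_def)
  have vv: "v \<bullet> v = 1" using nv by (simp add: dot_square_norm)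
  define m where "m = f v"
  have key: "w \<bullet> (A *v v) = 0" if wV: "w \<in> V" and wv: "w \<bullet> v = 0" for w
  proof -
    define c where "c = w \<bullet> (A *v v)"
    define K where "K = m * (w \<bullet> w) - w \<bullet> (A *v w)"
    have "2*t*c \<le> t^2*K" for t
    proof -
      define z where "z = v + t *\<^sub>R w"
      have zV: "z \<in> V" using Vsub[OF vV wV] z_def by simp
      have zz: "z \<bullet> z = 1 + t^2 * (w \<bullet> w)"
        using vv wv by (simp add: z_def inner_add_left inner_add_right inner_commute power2_eq_square)
      have zpos: "z \<bullet> z > 0" using zz by (smt (verit) inner_ge_zero mult_nonneg_nonneg zero_le_power2)
      hence z0: "z \<noteq> 0" by auto
      have "(1/norm z) *\<^sub>R z \<in> S" using z0 Vscale[OF zV] by (simp add: S_def)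
      hence "f ((1/norm z) *\<^sub>R z) \<le> m" using vmax m_def by auto
      moreover have "f ((1/norm z) *\<^sub>R z) = f z / (z \<bullet> z)"
        by (simp add: f_def matrix_vector_mult_scaleR dot_square_norm power2_eq_square)
      ultimately have "f z \<le> m * (z \<bullet> z)" using zpos by (simp add: divide_le_eq)
      moreover have "f z = m + 2*t*c + t^2 * (w \<bullet> (A *v w))"
      proof -
        have "v \<bullet> (A *v w) = c" using sym_dot[OF sym, of v w] by (simp add: c_def inner_commute)
        thus ?thesis
          by (simp add: f_def z_def m_def c_def matrix_vector_right_distrib matrix_vector_mult_scaleR
              inner_add_left inner_add_right power2_eq_square algebra_simps)
      qed
      ultimately show ?thesis using zz by (simp add: K_def algebra_simps)
    qed
    thus ?thesis using quad_neg_contra c_def by blast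
  qed
  define u where "u = A *v v - m *\<^sub>R v"
  have AvV: "A *v v \<in> V"
  proof -
    { fix e assume e: "e \<in> E"
      then obtain l where "A *v e = l *\<^sub>R e" using eig by auto
      hence "e \<bullet> (A *v v) = l * (e \<bullet> v)" using sym_dot[OF sym, of e v] by simp
      also have "e \<bullet> v = 0" using vV e by (simp add: V_def)
      finally have "e \<bullet> (A *v v) = 0" by simp }
    thus ?thesis by (simp add: V_def)
  qed
  have uV: "u \<in> V" unfolding u_def using Vsub[OF AvV Vscale[OF vV, of "-m"], of 1] by simp
  have uv: "u \<bullet> v = 0" using vv by (simp add: u_def m_def f_def inner_diff_left inner_commute inner_diff_right)
  have "u \<bullet> (A *v v) = 0" using key[OF uV uv] .
  hence "u \<bullet> u = 0" using uv by (simp add: u_def inner_diff_right)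
  hence "u = 0" by simp
  hence "A *v v = m *\<^sub>R v" by (simp add: u_def)
  thus ?thesis using nv vV by (auto simp: V_def)
qed

definition diagm :: "real^'n \<Rightarrow> real^'n^'n" where
  "diagm d = (\<chi> i j. if i = j then d $ i else 0)"

lemma eig_basis:
  fixes A :: "real^'n^'n"
  assumes sym: "sym_mat A"
  shows "k \<le> CARD('n) \<Longrightarrow> \<exists>E. finite E \<and> card E = k \<and> (\<forall>e\<in>E. norm e = 1 \<and> (\<exists>l. A *v e = l *\<^sub>R e))
           \<and> (\<forall>e\<in>E. \<forall>e'\<in>E. e \<noteq> e' \<longrightarrow> e \<bullet> e' = 0)"
proof (induction k)
  case 0
  show ?case by (rule exI[of _ "{}"]) simp
next
  case (Suc k)
  then obtain E where E: "finite E" "card E = k" "\<forall>e\<in>E. norm e = 1 \<and> (\<exists>l. A *v e = l *\<^sub>R e)"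
    "\<forall>e\<in>E. \<forall>e'\<in>E. e \<noteq> e' \<longrightarrow> e \<bullet> e' = 0" by auto
  obtain v where v: "norm v = 1" "\<forall>e\<in>E. e \<bullet> v = 0" "\<exists>l. A *v v = l *\<^sub>R v"
    using eig_step[OF sym E(1)] E Suc.prems by auto
  have "v \<notin> E"
  proof
    assume "v \<in> E" hence "v \<bullet> v = 0" using v(2) by auto
    thus False using v(1) by auto
  qed
  show ?case
    apply (rule exI[of _ "insert v E"])
    using E v \<open>v \<notin> E\<close> by (auto simp: inner_commute)
qed

lemma spectral:
  fixes A :: "real^'n^'n"
  assumes sym: "sym_mat A"
  shows "\<exists>Q d. orthogonal_matrix Q \<and> (\<forall>k. A *v column k Q = d $ k *\<^sub>R column k Q)"
proof -
  obtain E where E: "finite E" "card E = CARD('n)" "\<forall>e\<in>E. norm e = 1 \<and> (\<exists>l. A *v e = l *\<^sub>R e)"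
    "\<forall>e\<in>E. \<forall>e'\<in>E. e \<noteq> e' \<longrightarrow> e \<bullet> e' = 0" using eig_basis[OF sym, of "CARD('n)"] by auto
  obtain g where g: "bij_betw g (UNIV::'n set) E"
    using finite_same_card_bij[of "UNIV::'n set" E] E by auto
  define Q where "Q = (\<chi> i j. (g j :: real^'n) $ i)"
  have col: "column j Q = g j" for j by (simp add: Q_def column_def vec_eq_iff)
  have gE: "g j \<in> E" for j using g by (auto simp: bij_betw_def)
  have ginj: "g i \<noteq> g j" if "i \<noteq> j" for i j using g that by (auto simp: bij_betw_def inj_on_def)
  have "orthogonal_matrix Q"
    unfolding orthogonal_matrix_orthonormal_columns col
    using E gE ginj by (auto simp: orthogonal_def)
  moreover have "\<exists>d. \<forall>k. A *v column k Q = d $ k *\<^sub>R column k Q"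
  proof -
    have "\<forall>k. \<exists>l. A *v g k = l *\<^sub>R g k" using E gE by auto
    then obtain l where "\<forall>k. A *v g k = l k *\<^sub>R g k" by metis
    thus ?thesis by (intro exI[of _ "\<chi> k. l k"]) (simp add: col)
  qed
  ultimately show ?thesis by blast
qed

lemma mult_diagm: "(M ** diagm d) $ i $ j = M $ i $ j * d $ j"
  by (simp add: matrix_matrix_mult_def diagm_def if_distrib sum.delta' cong: if_cong)

lemma diagm_mult: "(diagm d ** M) $ i $ j = d $ i * M $ i $ j"
proof -
  have "(diagm d ** M) $ i $ j = (\<Sum>k\<in>UNIV. (if i = k then d $ i else 0) * M $ k $ j)"
    by (simp add: matrix_matrix_mult_def diagm_def)
  also have "\<dots> = (\<Sum>k\<in>UNIV. if i = k then d $ i * M $ i $ j else 0)" by (rule sum.cong) auto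
  finally show ?thesis by simp
qed

lemma spectral_decomp:
  fixes A :: "real^'n^'n"
  assumes sym: "sym_mat A"
  shows "\<exists>Q d. orthogonal_matrix Q \<and> A = Q ** diagm d ** transpose Q \<and>
     (\<forall>k. d $ k = column k Q \<bullet> (A *v column k Q)) \<and> (\<forall>k. norm (column k Q) = 1)"
proof -
  obtain Q d where Q: "orthogonal_matrix Q" and ev: "\<forall>k. A *v column k Q = d $ k *\<^sub>R column k Q"
    using spectral[OF sym] by blast
  have nc: "norm (column k Q) = 1" for k using Q orthogonal_matrix_orthonormal_columns by blast
  have "A ** Q = Q ** diagm d"
  proof -
    have "(A ** Q) $ i $ j = (Q ** diagm d) $ i $ j" for i j
    proof -
      have "(A ** Q) $ i $ j = (A *v column j Q) $ i"
        by (simp add: matrix_matrix_mult_def matrix_vector_mult_def column_def)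
      also have "\<dots> = d $ j * Q $ i $ j" using ev by (simp add: column_def)
      finally show ?thesis by (simp add: mult_diagm)
    qed
    thus ?thesis by (simp add: vec_eq_iff)
  qed
  hence "A = Q ** diagm d ** transpose Q"
    using Q by (metis matrix_mul_assoc matrix_mul_rid orthogonal_matrix_def)
  moreover have "d $ k = column k Q \<bullet> (A *v column k Q)" for k
  proof -
    have "column k Q \<bullet> column k Q = 1" using nc[of k] by (simp add: dot_square_norm)
    thus ?thesis using ev by simp
  qed
  ultimately show ?thesis using Q nc by blast
qed

lemma matrix_add_rdistrib': "((B::real^'n^'m) + C) ** (A::real^'k^'n) = B ** A + C ** A"
  by (simp add: vec_eq_iff matrix_matrix_mult_def sum.distrib algebra_simps)

lemma transpose_diagm[simp]: "transpose (diagm d) = diagm d"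
  by (simp add: vec_eq_iff transpose_def diagm_def)

lemma diagm_diagm: "diagm a ** diagm b = diagm (\<chi> k. a $ k * b $ k)"
  by (simp add: vec_eq_iff mult_diagm) (simp add: diagm_def)

lemma diagm_one: "diagm (\<chi> k. 1) = mat 1"
  by (simp add: vec_eq_iff diagm_def mat_def)

lemma det_decomp_gen: "det (W ** diagm d ** transpose W) = det W * det W * prod (\<lambda>k. d $ k) UNIV"
proof -
  have "det (diagm d) = prod (\<lambda>k. d $ k) UNIV"
    by (subst det_diagonal) (auto simp: diagm_def)
  thus ?thesis by (simp add: det_mul det_transpose)
qed

lemma det_decomp:
  assumes "orthogonal_matrix Q"
  shows "det (Q ** diagm d ** transpose Q) = prod (\<lambda>k. d $ k) UNIV"
proof -
  have "det Q * det Q = 1" using det_orthogonal_matrix[OF assms] by auto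
  thus ?thesis by (simp add: det_decomp_gen)
qed

lemma tmult_entry: "(transpose Q ** M) $ k $ l = (\<Sum>i\<in>UNIV. Q $ i $ k * M $ i $ l)"
  by (simp add: matrix_matrix_mult_def transpose_def)

lemma trace_decomp:
  "trace (A ** (Q ** diagm d ** transpose Q)) = (\<Sum>k\<in>UNIV. d $ k * (column k Q \<bullet> (A *v column k Q)))"
proof -
  have "trace (A ** (Q ** diagm d ** transpose Q)) = trace ((A ** Q ** diagm d) ** transpose Q)"
    by (simp add: matrix_mul_assoc)
  also have "\<dots> = trace (transpose Q ** (A ** Q ** diagm d))"
    by (rule trace_mul_sym)
  also have "\<dots> = (\<Sum>k\<in>UNIV. d $ k * (column k Q \<bullet> (A *v column k Q)))"
    unfolding trace_def
  proof (rule sum.cong[OF refl])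
    fix k
    have "(transpose Q ** (A ** Q ** diagm d)) $ k $ k = (\<Sum>i\<in>UNIV. Q $ i $ k * ((A ** Q) $ i $ k * d $ k))"
      by (simp add: tmult_entry mult_diagm)
    also have "\<dots> = d $ k * (\<Sum>i\<in>UNIV. Q $ i $ k * (A ** Q) $ i $ k)"
      by (simp add: sum_distrib_left algebra_simps)
    moreover have "(\<Sum>i\<in>UNIV. Q $ i $ k * (A ** Q) $ i $ k) = column k Q \<bullet> (A *v column k Q)"
      by (simp add: inner_vec_def column_def matrix_matrix_mult_def matrix_vector_mult_def)
    hence "d $ k * (\<Sum>i\<in>UNIV. Q $ i $ k * (A ** Q) $ i $ k) = d $ k * (column k Q \<bullet> (A *v column k Q))"
      by simp
    ultimately show "(transpose Q ** (A ** Q ** diagm d)) $ k $ k = d $ k * (column k Q \<bullet> (A *v column k Q))" by simp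
  qed
  finally show ?thesis .
qed

lemma entry_decomp_bound:
  assumes Q: "orthogonal_matrix Q" and d: "\<forall>k. d $ k \<ge> 0"
  shows "\<bar>(Q ** diagm d ** transpose Q) $ i $ j\<bar> \<le> (\<Sum>k\<in>UNIV. d $ k)"
proof -
  have nc: "norm (column k Q) = 1" for k using Q orthogonal_matrix_orthonormal_columns by blast
  have qb: "\<bar>Q $ i $ k\<bar> \<le> 1" for i k
    using component_le_norm_cart[of "column k Q" i] nc[of k] by (simp add: column_def)
  have "(Q ** diagm d ** transpose Q) $ i $ j = (\<Sum>k\<in>UNIV. Q $ i $ k * d $ k * Q $ j $ k)"
    by (simp add: matrix_matrix_mult_def[of "Q ** diagm d"] mult_diagm transpose_def)
  also have "\<bar>\<dots>\<bar> \<le> (\<Sum>k\<in>UNIV. \<bar>Q $ i $ k * d $ k * Q $ j $ k\<bar>)" by (rule sum_abs)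
  also have "\<dots> \<le> (\<Sum>k\<in>UNIV. d $ k)"
  proof (rule sum_mono)
    fix k
    have "\<bar>Q $ i $ k * d $ k * Q $ j $ k\<bar> = \<bar>Q $ i $ k\<bar> * \<bar>Q $ j $ k\<bar> * d $ k"
      using d by (simp add: abs_mult)
    also have "\<dots> \<le> 1 * 1 * d $ k"
      using qb d by (intro mult_right_mono mult_mono) auto
    finally show "\<bar>Q $ i $ k * d $ k * Q $ j $ k\<bar> \<le> d $ k" by simp
  qed
  finally show ?thesis .
qed

lemma dot_transpose_left: "x \<bullet> (transpose (P::real^'n^'m) *v y) = (P *v x) \<bullet> y"
proof -
  have "x \<bullet> (transpose P *v y) = x \<bullet> (y v* P)" by (simp only: transpose_matrix_vector)
  also have "\<dots> = (y v* P) \<bullet> x" by (rule inner_commute)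
  also have "\<dots> = y \<bullet> (P *v x)" by (rule dot_lmul_matrix)
  also have "\<dots> = (P *v x) \<bullet> y" by (rule inner_commute)
  finally show ?thesis .
qed

lemma quad_congr: "x \<bullet> ((transpose (P::real^'n^'m) ** B ** P) *v x) = (P *v x) \<bullet> (B *v (P *v x))"
  by (simp only: matrix_vector_mul_assoc[symmetric]) (rule dot_transpose_left)

lemma M_quad:
  assumes "X \<in> M_set eps"
  shows "x \<bullet> (X *v x) \<ge> eps * (x \<bullet> x)"
proof -
  have "0 \<le> x \<bullet> ((X - eps *\<^sub>R mat 1) *v x)" using assms by (auto simp: M_set_def psd_mat_def)
  also have "(X - eps *\<^sub>R mat 1) *v x = X *v x - eps *\<^sub>R x"
    by (simp add: matrix_vector_mult_diff_rdistrib scaleR_matrix_vector_assoc[symmetric])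
  finally show ?thesis by (simp add: inner_diff_right)
qed

lemma M_decomp:
  assumes "X \<in> M_set eps"
  shows "\<exists>Q d. orthogonal_matrix Q \<and> X = Q ** diagm d ** transpose Q \<and> (\<forall>k. d $ k \<ge> eps)
     \<and> (\<forall>k. norm (column k Q) = 1)"
proof -
  have "sym_mat X" using assms by (simp add: M_set_def)
  then obtain Q d where Q: "orthogonal_matrix Q" "X = Q ** diagm d ** transpose Q"
     "\<forall>k. d $ k = column k Q \<bullet> (X *v column k Q)" "\<forall>k. norm (column k Q) = 1"
    using spectral_decomp by blast
  have "d $ k \<ge> eps" for k
  proof -
    have "column k Q \<bullet> column k Q = 1" using Q(4) by (simp add: dot_square_norm)
    thus ?thesis using M_quad[OF assms, of "column k Q"] Q(3) by simp
  qed
  thus ?thesis using Q by blast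
qed

lemma M_det_pos:
  assumes "X \<in> M_set eps" "eps > 0"
  shows "det X > 0"
proof -
  obtain Q d where Q: "orthogonal_matrix Q" "X = Q ** diagm d ** transpose Q" "\<forall>k. d $ k \<ge> eps"
    using M_decomp[OF assms(1)] by blast
  have "det X = prod (\<lambda>k. d $ k) UNIV" using Q det_decomp by simp
  also have "\<dots> > 0" using Q(3) assms(2) by (intro prod_pos) (auto intro: less_le_trans)
  finally show ?thesis .
qed

lemma sqrt_amgm:
  fixes m :: real assumes "m > 0"
  shows "ln m / 2 \<le> ln ((1 + m)/2)" and "m \<noteq> 1 \<Longrightarrow> ln m / 2 < ln ((1 + m)/2)"
proof -
  have sq: "sqrt m * sqrt m = m" using assms by simp
  have sp: "sqrt m > 0" using assms by simp
  have e: "ln m / 2 = ln (sqrt m)" using assms by (simp add: ln_sqrt)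
  have "(sqrt m - 1)^2 \<ge> 0" by simp
  hence "sqrt m \<le> (1 + m)/2" using sq by (simp add: power2_eq_square algebra_simps)
  thus "ln m / 2 \<le> ln ((1 + m)/2)" using e sp by simp
  assume "m \<noteq> 1"
  hence "sqrt m \<noteq> 1" using sq by auto
  hence "(sqrt m - 1)^2 > 0" by simp
  hence "sqrt m < (1 + m)/2" using sq by (simp add: power2_eq_square algebra_simps)
  thus "ln m / 2 < ln ((1 + m)/2)" using e sp by simp
qed

lemma logdet_strict:
  fixes X1 X2 :: "real^'n^'n"
  assumes eps: "eps > 0" and X1: "X1 \<in> M_set eps" and X2: "X2 \<in> M_set eps" and ne: "X1 \<noteq> X2"
  shows "(ln (det X1) + ln (det X2))/2 < ln (det ((1/2) *\<^sub>R (X1 + X2)))"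
proof -
  obtain Q l where Q: "orthogonal_matrix Q" and X1d: "X1 = Q ** diagm l ** transpose Q"
      and lb: "\<forall>k. l $ k \<ge> eps"
    using M_decomp[OF X1] by blast
  have lpos: "l $ k > 0" for k using lb eps by (meson less_le_trans)
  have QtQ: "transpose Q ** Q = mat 1" and QQt: "Q ** transpose Q = mat 1"
    using Q by (auto simp: orthogonal_matrix_def)
  define s where "s = (\<chi> k. sqrt (l $ k))"
  define si where "si = (\<chi> k. 1 / sqrt (l $ k))"
  define L where "L = Q ** diagm s"
  define Li where "Li = diagm si ** transpose Q"
  have LiL: "Li ** L = mat 1"
  proof -
    have "Li ** L = diagm si ** ((transpose Q ** Q) ** diagm s)"
      by (simp add: Li_def L_def matrix_mul_assoc)
    also have "\<dots> = diagm (\<chi> k. si $ k * s $ k)" by (simp add: QtQ diagm_diagm)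
    also have "(\<chi> k. si $ k * s $ k) = (\<chi> k. 1)"
      using lpos by (simp add: vec_eq_iff si_def s_def) (metis less_irrefl)
    finally show ?thesis by (simp add: diagm_one)
  qed
  hence LLi: "L ** Li = mat 1" using matrix_left_right_inverse by blast
  have LLt: "L ** transpose L = X1"
  proof -
    have "L ** transpose L = Q ** (diagm s ** diagm s) ** transpose Q"
      by (simp add: L_def matrix_transpose_mul matrix_mul_assoc)
    also have "diagm s ** diagm s = diagm l"
      using lpos by (simp add: diagm_diagm s_def vec_eq_iff less_imp_le)
    finally show ?thesis using X1d by simp
  qed
  define Z where "Z = Li ** X2 ** transpose Li"
  have symX2: "transpose X2 = X2" using X2 by (simp add: M_set_def sym_mat_def)
  have "sym_mat Z"
    unfolding sym_mat_def Z_def by (simp add: matrix_transpose_mul symX2 matrix_mul_assoc)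
  then obtain R mu where R: "orthogonal_matrix R" and Zd: "Z = R ** diagm mu ** transpose R"
      and mud: "\<forall>k. mu $ k = column k R \<bullet> (Z *v column k R)" and nR: "\<forall>k. norm (column k R) = 1"
    using spectral_decomp by blast
  have RRt: "R ** transpose R = mat 1" using R by (auto simp: orthogonal_matrix_def)
  have mupos: "mu $ k > 0" for k
  proof -
    define P where "P = transpose Li"
    define c where "c = column k R"
    have ZP: "Z = transpose P ** X2 ** P" by (simp add: Z_def P_def)
    have "transpose L ** P = mat 1"
      unfolding P_def by (metis LiL matrix_transpose_mul transpose_mat)
    hence "c = transpose L *v (P *v c)" by (simp add: matrix_vector_mul_assoc)
    moreover have "c \<noteq> 0" using nR[rule_format, of k] unfolding c_def by (metis norm_zero zero_neq_one)
    ultimately have Pc: "P *v c \<noteq> 0" by auto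
    have "mu $ k = (P *v c) \<bullet> (X2 *v (P *v c))" using mud ZP quad_congr c_def by metis
    also have "\<dots> \<ge> eps * ((P *v c) \<bullet> (P *v c))" by (rule M_quad[OF X2])
    finally show ?thesis using Pc eps by (smt (verit) inner_gt_zero_iff mult_pos_pos)
  qed
  have X2L: "X2 = L ** Z ** transpose L"
  proof -
    have "L ** Z ** transpose L = (L ** Li) ** X2 ** transpose (L ** Li)"
      by (simp add: Z_def matrix_transpose_mul matrix_mul_assoc)
    thus ?thesis using LLi by (simp add: transpose_mat)
  qed
  define W where "W = L ** R"
  define one where "one = ((\<chi> k. 1) :: real^'n)"
  have X2W: "X2 = W ** diagm mu ** transpose W"
    using X2L Zd by (simp add: W_def matrix_transpose_mul matrix_mul_assoc)
  have X1W: "X1 = W ** diagm one ** transpose W"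
  proof -
    have "W ** diagm one ** transpose W = L ** (R ** transpose R) ** transpose L"
      by (simp add: W_def one_def diagm_one matrix_transpose_mul matrix_mul_assoc)
    thus ?thesis using RRt LLt by simp
  qed
  have midW: "(1/2) *\<^sub>R (X1 + X2) = W ** diagm (\<chi> k. (1 + mu $ k)/2) ** transpose W"
  proof -
    have "(1/2) *\<^sub>R (X1 + X2) = W ** ((1/2) *\<^sub>R (diagm one + diagm mu)) ** transpose W"
      unfolding X1W X2W
      by (simp add: matrix_add_ldistrib matrix_add_rdistrib' scalar_matrix_assoc matrix_scalar_ac scaleR_add_right)
    also have "(1/2) *\<^sub>R (diagm one + diagm mu) = diagm (\<chi> k. (1 + mu $ k)/2)"
      by (simp add: vec_eq_iff diagm_def one_def)
    finally show ?thesis .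
  qed
  define w where "w = det W * det W"
  have d1: "det X1 = w" using X1W by (simp add: det_decomp_gen w_def one_def)
  have wpos: "w > 0" using d1 M_det_pos[OF X1 eps] by simp
  have d2: "det X2 = w * prod (\<lambda>k. mu $ k) UNIV" using X2W by (simp add: det_decomp_gen w_def)
  have dm: "det ((1/2) *\<^sub>R (X1 + X2)) = w * prod (\<lambda>k. (1 + mu $ k)/2) UNIV"
    using midW by (simp add: det_decomp_gen w_def)
  have l2: "ln (det X2) = ln w + (\<Sum>k\<in>UNIV. ln (mu $ k))"
    using d2 wpos mupos by (simp add: ln_mult prod_pos ln_prod less_imp_neq[symmetric])
  have lm: "ln (det ((1/2) *\<^sub>R (X1 + X2))) = ln w + (\<Sum>k\<in>UNIV. ln ((1 + mu $ k)/2))"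
  proof -
    have "\<And>k. (1 + mu $ k)/2 > 0" using mupos by (smt (verit) divide_pos_pos)
    thus ?thesis using dm wpos by (simp add: ln_mult prod_pos ln_prod less_imp_neq[symmetric])
  qed
  have "\<exists>k. mu $ k \<noteq> 1"
  proof (rule ccontr)
    assume "\<not> ?thesis"
    hence "mu = one" by (simp add: vec_eq_iff one_def)
    thus False using X1W X2W ne by simp
  qed
  then obtain k0 where k0: "mu $ k0 \<noteq> 1" by blast
  have "(\<Sum>k\<in>UNIV. ln (mu $ k) / 2) < (\<Sum>k\<in>UNIV. ln ((1 + mu $ k)/2))"
    apply (rule sum_strict_mono_ex1)
    using sqrt_amgm mupos k0 by auto
  hence "(\<Sum>k\<in>UNIV. ln (mu $ k)) / 2 < (\<Sum>k\<in>UNIV. ln ((1 + mu $ k)/2))"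
    by (simp add: sum_divide_distrib)
  thus ?thesis using l2 lm d1 by simp
qed

lemma frob_eq: "frob_norm (X::real^'n^'n) = norm X"
  by (simp add: frob_norm_def norm_vec_def L2_set_def sum_nonneg)

lemma cont_det: "continuous_on S (\<lambda>z. det (f z :: real^'n^'n))" if "\<And>i j. continuous_on S (\<lambda>z. f z $ i $ j)"
  unfolding det_def by (intro continuous_intros that)

lemma transpose_shift: "transpose (X - e *\<^sub>R mat 1) = transpose X - e *\<^sub>R (mat 1::real^'n^'n)"
  by (simp add: transpose_def vec_eq_iff mat_def)

lemma M_iff: fixes X :: "real^'n^'n" shows "X \<in> M_set eps \<longleftrightarrow> transpose X = X \<and> (\<forall>x. eps * (x \<bullet> x) \<le> x \<bullet> (X *v x))"
proof -
  have e: "x \<bullet> ((X - eps *\<^sub>R mat 1) *v x) = x \<bullet> (X *v x) - eps * (x \<bullet> x)" for x :: "real^'n"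
    by (simp add: matrix_vector_mult_diff_rdistrib scaleR_matrix_vector_assoc[symmetric] inner_diff_right)
  show ?thesis unfolding M_set_def psd_mat_def sym_mat_def transpose_shift by (auto simp: e)
qed

lemma quad_expand: "x \<bullet> ((X::real^'n^'n) *v x) = (\<Sum>i\<in>UNIV. x $ i * (\<Sum>j\<in>UNIV. X $ i $ j * x $ j))"
  by (simp add: inner_vec_def matrix_vector_mult_def)

lemma M_closed: "closed (M_set eps :: (real^'n^'n) set)"
proof -
  have "M_set eps = {X::real^'n^'n. \<forall>i j. X $ j $ i = X $ i $ j} \<inter>
      (\<Inter>x. {X. eps * (x \<bullet> x) \<le> (\<Sum>i\<in>UNIV. x $ i * (\<Sum>j\<in>UNIV. X $ i $ j * x $ j))})"
    unfolding quad_expand[symmetric] by (auto simp: M_iff vec_eq_iff transpose_def)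
  also have "closed \<dots>"
    by (intro closed_Int closed_INT ballI closed_Collect_all closed_Collect_eq closed_Collect_le continuous_intros)
  finally show ?thesis .
qed

lemma avg_le: "(a::real) \<le> b \<Longrightarrow> a \<le> c \<Longrightarrow> a \<le> 1/2 * (b + c)"
  by (simp add: field_simps)

lemma M_mid: fixes X1 X2 :: "real^'n^'n" assumes "X1 \<in> M_set eps" "X2 \<in> M_set eps"
  shows "(1/2) *\<^sub>R (X1 + X2) \<in> M_set eps"
proof -
  have t: "transpose X1 = X1" "transpose X2 = X2" using assms M_iff by auto
  have "transpose ((1/2) *\<^sub>R (X1 + X2)) = (1/2) *\<^sub>R (X1 + X2)"
    using t by (simp add: vec_eq_iff transpose_def)
  moreover have "eps * (x \<bullet> x) \<le> x \<bullet> (((1/2) *\<^sub>R (X1 + X2)) *v x)" for x :: "real^'n"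
  proof -
    have h1: "x \<bullet> (((1/2) *\<^sub>R (X1 + X2)) *v x) = (1/2) * (x \<bullet> (X1 *v x) + x \<bullet> (X2 *v x))"
      by (simp add: scaleR_matrix_vector_assoc[symmetric] matrix_vector_mult_add_rdistrib inner_add_right)
    have "eps * (x \<bullet> x) \<le> x \<bullet> (X1 *v x)" using assms(1) M_iff by blast
    moreover have "eps * (x \<bullet> x) \<le> x \<bullet> (X2 *v x)" using assms(2) M_iff by blast
    ultimately show ?thesis unfolding h1 by (rule avg_le)
  qed
  ultimately show ?thesis using M_iff by blast
qed

lemma ref_M: "eps *\<^sub>R (mat 1 :: real^'n^'n) \<in> M_set eps"
proof -
  have "transpose (eps *\<^sub>R mat 1) = eps *\<^sub>R (mat 1 :: real^'n^'n)" by (simp add: transpose_def vec_eq_iff mat_def)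
  moreover have "(eps *\<^sub>R (mat 1 :: real^'n^'n)) *v x = eps *\<^sub>R x" for x
    by (simp add: scaleR_matrix_vector_assoc[symmetric])
  ultimately show ?thesis unfolding M_iff by simp
qed

lemma N_add:
  assumes "x \<in> N_set s Nb" "y \<in> N_set s Nb"
  shows "x + y \<in> N_set s Nb"
proof -
  have xa: "(\<forall>i j. s i = s j \<longrightarrow> x $ i $ i = x $ j $ j) \<and>
    (\<forall>i j k l. j \<in> Nb i \<and> l \<in> Nb k \<and> s i = s k \<and> s j = s l \<longrightarrow> x $ i $ j = x $ k $ l) \<and>
    (\<forall>i j. i \<noteq> j \<and> j \<notin> Nb i \<longrightarrow> x $ i $ j = 0)"
    using assms(1) unfolding N_set_def mem_Collect_eq .
  note x1 = xa[THEN conjunct1] and x2 = xa[THEN conjunct2, THEN conjunct1]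
    and x3 = xa[THEN conjunct2, THEN conjunct2]
  have ya: "(\<forall>i j. s i = s j \<longrightarrow> y $ i $ i = y $ j $ j) \<and>
    (\<forall>i j k l. j \<in> Nb i \<and> l \<in> Nb k \<and> s i = s k \<and> s j = s l \<longrightarrow> y $ i $ j = y $ k $ l) \<and>
    (\<forall>i j. i \<noteq> j \<and> j \<notin> Nb i \<longrightarrow> y $ i $ j = 0)"
    using assms(2) unfolding N_set_def mem_Collect_eq .
  note y1 = ya[THEN conjunct1] and y2 = ya[THEN conjunct2, THEN conjunct1]
    and y3 = ya[THEN conjunct2, THEN conjunct2]
  show ?thesis unfolding N_set_def mem_Collect_eq
  proof (intro conjI allI impI)
    fix i j assume h: "s i = s j"
    show "(x + y) $ i $ i = (x + y) $ j $ j" using x1[rule_format, OF h] y1[rule_format, OF h] by simp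
  next
    fix i j k l assume h: "j \<in> Nb i \<and> l \<in> Nb k \<and> s i = s k \<and> s j = s l"
    have "x $ i $ j = x $ k $ l" using x2[rule_format, OF h] .
    moreover have "y $ i $ j = y $ k $ l" using y2[rule_format, OF h] .
    ultimately show "(x + y) $ i $ j = (x + y) $ k $ l" by simp
  next
    fix i j assume h: "i \<noteq> j \<and> j \<notin> Nb i"
    have "x $ i $ j = 0" using x3[rule_format, OF h] .
    moreover have "y $ i $ j = 0" using y3[rule_format, OF h] .
    ultimately show "(x + y) $ i $ j = 0" by simp
  qed
qed

lemma N_scale:
  assumes "x \<in> N_set s Nb"
  shows "c *\<^sub>R x \<in> N_set s Nb"
proof -
  have xa: "(\<forall>i j. s i = s j \<longrightarrow> x $ i $ i = x $ j $ j) \<and>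
    (\<forall>i j k l. j \<in> Nb i \<and> l \<in> Nb k \<and> s i = s k \<and> s j = s l \<longrightarrow> x $ i $ j = x $ k $ l) \<and>
    (\<forall>i j. i \<noteq> j \<and> j \<notin> Nb i \<longrightarrow> x $ i $ j = 0)"
    using assms(1) unfolding N_set_def mem_Collect_eq .
  note x1 = xa[THEN conjunct1] and x2 = xa[THEN conjunct2, THEN conjunct1]
    and x3 = xa[THEN conjunct2, THEN conjunct2]
  show ?thesis unfolding N_set_def mem_Collect_eq
  proof (intro conjI allI impI)
    fix i j assume h: "s i = s j"
    show "(c *\<^sub>R x) $ i $ i = (c *\<^sub>R x) $ j $ j" using x1[rule_format, OF h] by simp
  next
    fix i j k l assume h: "j \<in> Nb i \<and> l \<in> Nb k \<and> s i = s k \<and> s j = s l"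
    have "x $ i $ j = x $ k $ l" using x2[rule_format, OF h] .
    thus "(c *\<^sub>R x) $ i $ j = (c *\<^sub>R x) $ k $ l" by simp
  next
    fix i j assume h: "i \<noteq> j \<and> j \<notin> Nb i"
    have "x $ i $ j = 0" using x3[rule_format, OF h] .
    thus "(c *\<^sub>R x) $ i $ j = 0" by simp
  qed
qed

lemma N_zero: "0 \<in> N_set s Nb"
  unfolding N_set_def by simp

lemma N_subspace: "subspace (N_set s Nb)"
  unfolding subspace_def using N_zero N_add N_scale by blast

lemma trace_scaleR: "trace (c *\<^sub>R (X::real^'n^'n)) = c * trace X"
  by (simp add: trace_def sum_distrib_left)

lemma norm_mat_le: "norm (X::real^'n^'n) \<le> (\<Sum>i\<in>UNIV. \<Sum>j\<in>UNIV. \<bar>X $ i $ j\<bar>)"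
proof -
  have "norm X \<le> (\<Sum>i\<in>UNIV. norm (X $ i))"
    unfolding norm_vec_def by (rule L2_set_le_sum) auto
  also have "\<dots> \<le> (\<Sum>i\<in>UNIV. \<Sum>j\<in>UNIV. \<bar>X $ i $ j\<bar>)"
    by (intro sum_mono norm_le_l1_cart)
  finally show ?thesis .
qed

lemma quad_mid:
  fixes u v :: "real^'n^'n"
  shows "(norm ((1/2) *\<^sub>R (u + v)))^2 \<le> ((norm u)^2 + (norm v)^2)/2"
    and "u \<noteq> v \<Longrightarrow> (norm ((1/2) *\<^sub>R (u + v)))^2 < ((norm u)^2 + (norm v)^2)/2"
proof -
  have e: "((norm u)^2 + (norm v)^2)/2 - (norm ((1/2) *\<^sub>R (u + v)))^2 = (norm (u - v))^2 / 4"
    by (simp add: power2_norm_eq_inner inner_add_left inner_add_right inner_diff_left inner_diff_right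
        inner_commute algebra_simps)
  show "(norm ((1/2) *\<^sub>R (u + v)))^2 \<le> ((norm u)^2 + (norm v)^2)/2" using e
    by (smt (verit) zero_le_power2 divide_nonneg_pos)
  assume "u \<noteq> v"
  hence "norm (u - v) > 0" by simp
  thus "(norm ((1/2) *\<^sub>R (u + v)))^2 < ((norm u)^2 + (norm v)^2)/2" using e
    by (smt (verit) zero_less_power divide_pos_pos)
qed

lemma A_pos:
  fixes B S :: "real^'n^'n"
  assumes B: "pd_mat B" and S: "psd_mat S"
  shows "\<exists>a>0. \<forall>x. a * (x \<bullet> x) \<le> x \<bullet> ((matrix_inv B + S) *v x)"
proof -
  have Bpos: "x \<noteq> 0 \<Longrightarrow> 0 < x \<bullet> (B *v x)" for x using B by (simp add: pd_mat_def)
  have "\<forall>x. B *v x = 0 \<longrightarrow> x = 0"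
  proof (intro allI impI)
    fix x assume "B *v x = 0"
    thus "x = 0" using Bpos[of x] by (metis inner_zero_right less_irrefl)
  qed
  then obtain B' where "B' ** B = mat 1" using matrix_left_invertible_ker by blast
  hence "B ** B' = mat 1 \<and> B' ** B = mat 1" using matrix_left_right_inverse by blast
  hence inv: "B ** matrix_inv B = mat 1 \<and> matrix_inv B ** B = mat 1"
    unfolding matrix_inv_def by (rule someI)
  define Bi where "Bi = matrix_inv B"
  define q where "q = (\<lambda>x::real^'n. x \<bullet> ((Bi + S) *v x))"
  have qpos: "0 < q x" if x0: "x \<noteq> 0" for x
  proof -
    define y where "y = Bi *v x"
    have By: "B *v y = x" using inv by (simp add: y_def Bi_def matrix_vector_mul_assoc)
    have y0: "y \<noteq> 0" using By x0 by auto
    have "x \<bullet> (Bi *v x) = y \<bullet> (B *v y)" using By by (simp add: y_def inner_commute)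
    hence "x \<bullet> (Bi *v x) > 0" using Bpos[OF y0] by simp
    moreover have "x \<bullet> (S *v x) \<ge> 0" using S by (simp add: psd_mat_def)
    ultimately show ?thesis by (simp add: q_def matrix_vector_mult_add_rdistrib inner_add_right)
  qed
  have ne: "sphere (0::real^'n) 1 \<noteq> {}"
  proof -
    obtain k :: 'n where True by blast
    have "axis k (1::real) \<in> sphere 0 1" by simp
    thus ?thesis by blast
  qed
  have "continuous_on (sphere 0 1) q" unfolding q_def by (intro continuous_intros)
  then obtain x0 where x0: "x0 \<in> sphere 0 1" and x0min: "\<And>y. y \<in> sphere 0 1 \<Longrightarrow> q x0 \<le> q y"
    using continuous_attains_inf[OF compact_sphere ne] by blast
  have "x0 \<noteq> 0" using x0 by auto
  hence apos: "q x0 > 0" using qpos by blast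
  have "q x0 * (x \<bullet> x) \<le> q x" for x
  proof (cases "x = 0")
    case True thus ?thesis by (simp add: q_def)
  next
    case False
    define u where "u = (1 / norm x) *\<^sub>R x"
    have u: "u \<in> sphere 0 1" using False by (simp add: u_def)
    have xu: "x = norm x *\<^sub>R u" using False by (simp add: u_def)
    have nu: "norm u = 1" using u by simp
    have qx: "q x = q u * (norm x)^2"
      by (subst xu, subst xu) (simp add: q_def matrix_vector_mult_scaleR power2_eq_square nu)
    have xx: "x \<bullet> x = (norm x)^2" by (simp add: power2_norm_eq_inner)
    have h: "q x0 * (norm x)^2 \<le> q u * (norm x)^2"
      using x0min[OF u] by (rule mult_right_mono) simp
    show ?thesis unfolding qx xx by (rule h)
  qed
  thus ?thesis using apos unfolding q_def Bi_def by blast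
qed

lemma ln_bound:
  fixes c a l :: real
  assumes "c > 0" "a > 0" "l > 0"
  shows "c * ln l \<le> (a/2) * l + c * (ln (2*c/a) - 1)"
proof -
  have r: "2*c/a > 0" using assms by simp
  have "ln (l / (2*c/a)) \<le> l / (2*c/a) - 1" using ln_le_minus_one r assms by simp
  moreover have "ln (l / (2*c/a)) = ln l - ln (2*c/a)" using r assms by (simp only: ln_div) simp
  moreover have "l / (2*c/a) = a * l / (2*c)" using assms by (simp add: field_simps)
  ultimately have "ln l - ln (2*c/a) \<le> a * l / (2*c) - 1" by (simp add: mult.commute)
  hence "c * (ln l - ln (2*c/a)) \<le> c * (a * l / (2*c) - 1)" using assms by (simp add: mult_left_mono)
  moreover have "c * (a * l / (2*c) - 1) = (a/2) * l - c" using assms by (simp add: field_simps)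
  ultimately show ?thesis by (simp add: algebra_simps)
qed

lemma coercive:
  fixes A X :: "real^'n^'n"
  assumes eps: "eps > 0" and c: "c > 0" and a: "a > 0"
    and hA: "\<forall>x. a * (x \<bullet> x) \<le> x \<bullet> (A *v x)" and X: "X \<in> M_set eps"
  shows "\<exists>t\<ge>0. (\<forall>i j. \<bar>X $ i $ j\<bar> \<le> t) \<and>
     (a/2) * t - real CARD('n) * (c * (ln (2*c/a) - 1)) \<le> - c * ln (det X) + trace (A ** X)"
proof -
  obtain Q d where Q: "orthogonal_matrix Q" and Xd: "X = Q ** diagm d ** transpose Q"
      and db: "\<forall>k. d $ k \<ge> eps" and nc: "\<forall>k. norm (column k Q) = 1"
    using M_decomp[OF X] by blast
  have dpos: "d $ k > 0" for k using db eps by (meson less_le_trans)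
  define t where "t = (\<Sum>k\<in>UNIV. d $ k)"
  define C1 where "C1 = c * (ln (2*c/a) - 1)"
  have t0: "t \<ge> 0" unfolding t_def using dpos by (simp add: sum_nonneg less_imp_le)
  have ent: "\<bar>X $ i $ j\<bar> \<le> t" for i j
    unfolding t_def Xd using entry_decomp_bound[OF Q] dpos by (simp add: less_imp_le)
  have lndet: "ln (det X) = (\<Sum>k\<in>UNIV. ln (d $ k))"
    using det_decomp[OF Q] Xd dpos by (simp add: ln_prod less_imp_neq[symmetric])
  have tr: "trace (A ** X) \<ge> (\<Sum>k\<in>UNIV. a * d $ k)"
  proof -
    have "trace (A ** X) = (\<Sum>k\<in>UNIV. d $ k * (column k Q \<bullet> (A *v column k Q)))"
      unfolding Xd by (rule trace_decomp)
    also have "\<dots> \<ge> (\<Sum>k\<in>UNIV. a * d $ k)"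
    proof (rule sum_mono)
      fix k
      have "column k Q \<bullet> column k Q = 1" using nc by (simp add: dot_square_norm)
      moreover have "a * (column k Q \<bullet> column k Q) \<le> column k Q \<bullet> (A *v column k Q)" using hA by blast
      ultimately have "a \<le> column k Q \<bullet> (A *v column k Q)" by simp
      thus "a * d $ k \<le> d $ k * (column k Q \<bullet> (A *v column k Q))"
        using dpos[of k] by (simp add: mult.commute mult_left_mono less_imp_le)
    qed
    finally show ?thesis .
  qed
  have "(\<Sum>k\<in>UNIV. (a/2) * d $ k - C1) \<le> (\<Sum>k\<in>UNIV. a * d $ k - c * ln (d $ k))"
  proof (rule sum_mono)
    fix k show "(a/2) * d $ k - C1 \<le> a * d $ k - c * ln (d $ k)"
      using ln_bound[OF c a dpos[of k]] by (simp add: C1_def)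
  qed
  moreover have "(\<Sum>k\<in>UNIV. (a/2) * d $ k - C1) = (a/2) * t - real CARD('n) * C1"
    by (simp add: t_def sum_subtractf sum_distrib_left)
  moreover have "(\<Sum>k\<in>UNIV. a * d $ k - c * ln (d $ k)) = (\<Sum>k\<in>UNIV. a * d $ k) - c * ln (det X)"
    by (simp add: lndet sum_subtractf sum_distrib_left)
  ultimately have "(a/2) * t - real CARD('n) * C1 \<le> - c * ln (det X) + trace (A ** X)"
    using tr by linarith
  thus ?thesis using t0 ent unfolding C1_def by blast
qed

lemma half_self: "(1/2) *\<^sub>R (X + X) = (X::real^'n^'n)"
  by (simp add: vec_eq_iff)

theorem theorem2:
  fixes nu eps gamma :: real
    and B S :: "real^'n^'n"
    and s :: "'n \<Rightarrow> 't" and Nb :: "'n \<Rightarrow> 'n set"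
  assumes "nu > real CARD('n)" and "eps > 0" and "gamma > 0"
    and "pd_mat B" and "psd_mat S"
    and "\<forall>i. i \<notin> Nb i"
  shows "\<exists>!XY. XY \<in> M_set eps \<times> N_set s Nb \<and>
           (\<forall>XY' \<in> M_set eps \<times> N_set s Nb.
              P_gamma nu gamma B S (fst XY) (snd XY) \<le> P_gamma nu gamma B S (fst XY') (snd XY'))"
proof -
  note nu = assms(1) and eps = assms(2) and gam = assms(3)
  define p where "p = real CARD('n)"
  define c where "c = nu - p"
  have c: "c > 0" using nu by (simp add: c_def p_def)
  define A where "A = matrix_inv B + S"
  define F where "F = (\<lambda>z::(real^'n^'n) \<times> (real^'n^'n). P_gamma nu gamma B S (fst z) (snd z))"
  define D where "D = (M_set eps :: (real^'n^'n) set) \<times> N_set s Nb"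
  have Fexp: "F z = - (c * ln (det (fst z))) + trace (A ** fst z) + gamma / 2 * (norm (fst z - snd z))^2" for z
    unfolding F_def P_gamma_def frob_eq c_def A_def p_def by (simp add: left_diff_distrib)
  obtain a where a: "a > 0" and hA: "\<forall>x. a * (x \<bullet> x) \<le> x \<bullet> (A *v x)"
    using A_pos[OF assms(4) assms(5)] unfolding A_def by blast
  define C1 where "C1 = c * (ln (2*c/a) - 1)"
  define ref where "ref = (eps *\<^sub>R (mat 1::real^'n^'n), 0::real^'n^'n)"
  have refD: "ref \<in> D" unfolding ref_def D_def using ref_M N_zero by auto
  define V0 where "V0 = F ref"
  define T where "T = 2 * (V0 + p * C1) / a"
  define U where "U = 2 * (V0 + p * C1) / gamma"
  define R0 where "R0 = 2 * p * p * T + sqrt U"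
  define R where "R = max (norm ref) R0"
  have bound: "norm z \<le> R0" if zD: "z \<in> D" and zV: "F z \<le> V0" for z
  proof -
    obtain X Y where z: "z = (X, Y)" by (cases z)
    have X: "X \<in> M_set eps" using zD z by (simp add: D_def)
    obtain t where t0: "t \<ge> 0" and ent: "\<forall>i j. \<bar>X $ i $ j\<bar> \<le> t"
      and low0: "(a/2) * t - p * C1 \<le> - c * ln (det X) + trace (A ** X)"
      using coercive[OF eps c a hA X] unfolding C1_def p_def by blast
    have "- c * ln (det X) = - (c * ln (det X))" by simp
    hence low: "(a/2) * t - p * C1 \<le> - (c * ln (det X)) + trace (A ** X)" using low0 by simp
    define q where "q = (norm (X - Y))^2"
    have q0: "q \<ge> 0" by (simp add: q_def)
    have "F z = - (c * ln (det X)) + trace (A ** X) + gamma / 2 * q" using Fexp z q_def by simp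
    hence sum: "(a/2) * t + (gamma/2) * q \<le> V0 + p * C1" using low zV by linarith
    have "(a/2) * t \<ge> 0" using a t0 by simp
    hence "(gamma/2) * q \<le> V0 + p * C1" using sum by linarith
    hence qU: "q \<le> U" using gam by (simp add: U_def field_simps)
    have "(gamma/2) * q \<ge> 0" using gam q0 by simp
    hence "(a/2) * t \<le> V0 + p * C1" using sum by linarith
    hence tT: "t \<le> T" using a by (simp add: T_def field_simps)
    have nXY: "norm (X - Y) \<le> sqrt U" using qU unfolding q_def by (simp add: real_le_rsqrt)
    have "norm X \<le> (\<Sum>i\<in>UNIV. \<Sum>j\<in>UNIV. \<bar>X $ i $ j\<bar>)" by (rule norm_mat_le)
    also have "\<dots> \<le> (\<Sum>i\<in>(UNIV::'n set). \<Sum>j\<in>(UNIV::'n set). t)" using ent by (intro sum_mono) auto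
    also have "\<dots> = p * p * t" by (simp add: p_def)
    finally have nX: "norm X \<le> p * p * T" using tT by (smt (verit) mult_left_mono p_def of_nat_0_le_iff mult_nonneg_nonneg)
    have "norm Y = norm (X - (X - Y))" by simp
    also have "\<dots> \<le> norm X + norm (X - Y)" by (rule norm_triangle_ineq4)
    finally have nY: "norm Y \<le> norm X + norm (X - Y)" .
    have "norm z \<le> norm X + norm Y" unfolding z by (rule norm_Pair_le)
    thus ?thesis using nX nY nXY unfolding R0_def by linarith
  qed
  define K where "K = D \<inter> cball 0 R"
  have closedD: "closed D" unfolding D_def
    by (intro closed_Times M_closed closed_subspace N_subspace)
  have compK: "compact K" unfolding K_def by (intro closed_Int_compact closedD compact_cball)
  have refK: "ref \<in> K" unfolding K_def R_def using refD by simp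
  hence neK: "K \<noteq> {}" by blast
  have detpos: "det (fst z) > 0" if "z \<in> K" for z
    using that M_det_pos[OF _ eps] by (auto simp: K_def D_def)
  have c1: "continuous_on K (\<lambda>z. det (fst z))" by (intro cont_det continuous_intros)
  have c2: "continuous_on K (\<lambda>z. ln (det (fst z)))"
    using detpos by (intro continuous_on_ln[OF c1]) (auto simp: less_imp_neq[symmetric])
  have c3: "continuous_on K (\<lambda>z. trace (A ** fst z))"
    unfolding trace_def matrix_matrix_mult_def by (intro continuous_intros)
  have "continuous_on K (\<lambda>z. - (c * ln (det (fst z))) + trace (A ** fst z) + gamma / 2 * (norm (fst z - snd z))^2)"
    by (intro continuous_intros c2 c3)
  moreover have "F = (\<lambda>z. - (c * ln (det (fst z))) + trace (A ** fst z) + gamma / 2 * (norm (fst z - snd z))^2)"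
    using Fexp by (intro ext) simp
  ultimately have contF: "continuous_on K F" by simp
  obtain z where zK: "z \<in> K" and zmin: "\<And>y. y \<in> K \<Longrightarrow> F z \<le> F y"
    using continuous_attains_inf[OF compK neK contF] by blast
  have zD: "z \<in> D" using zK by (simp add: K_def)
  have zminD: "F z \<le> F w" if wD: "w \<in> D" for w
  proof (cases "norm w \<le> R")
    case True thus ?thesis using wD zmin by (simp add: K_def dist_norm)
  next
    case False
    hence "norm w > R0" by (simp add: R_def)
    hence "F w > V0" using bound[OF wD] by fastforce
    moreover have "F z \<le> V0" using zmin[OF refK] by (simp add: V0_def)
    ultimately show ?thesis by simp
  qed
  have uniq: "z1 = z2" if z1: "z1 \<in> D" "\<forall>w\<in>D. F z1 \<le> F w" and z2: "z2 \<in> D" "\<forall>w\<in>D. F z2 \<le> F w" for z1 z2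
  proof (rule ccontr)
    assume ne: "z1 \<noteq> z2"
    obtain X1 Y1 where e1: "z1 = (X1, Y1)" by (cases z1)
    obtain X2 Y2 where e2: "z2 = (X2, Y2)" by (cases z2)
    have X1: "X1 \<in> M_set eps" and Y1: "Y1 \<in> N_set s Nb" using z1 e1 by (auto simp: D_def)
    have X2: "X2 \<in> M_set eps" and Y2: "Y2 \<in> N_set s Nb" using z2 e2 by (auto simp: D_def)
    define mX where "mX = (1/2) *\<^sub>R (X1 + X2)"
    define mY where "mY = (1/2) *\<^sub>R (Y1 + Y2)"
    have mD: "(mX, mY) \<in> D" unfolding D_def mX_def mY_def
      using M_mid[OF X1 X2] N_scale[OF N_add[OF Y1 Y2]] by simp
    have eqF: "F z1 = F z2" using z1 z2 by (meson order_antisym)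
    have le: "F z1 \<le> F (mX, mY)" using z1 mD by blast
    define G where "G = gamma / 2"
    have G0: "G > 0" using gam by (simp add: G_def)
    define L1 where "L1 = ln (det X1)"
    define L2 where "L2 = ln (det X2)"
    define Lm where "Lm = ln (det mX)"
    define Q1 where "Q1 = (norm (X1 - Y1))^2"
    define Q2 where "Q2 = (norm (X2 - Y2))^2"
    define Qm where "Qm = (norm (mX - mY))^2"
    define t1 where "t1 = trace (A ** X1)"
    define t2 where "t2 = trace (A ** X2)"
    define tm where "tm = trace (A ** mX)"
    have F1: "F z1 = - (c * L1) + t1 + G * Q1" using Fexp e1 L1_def t1_def Q1_def G_def by simp
    have F2: "F z2 = - (c * L2) + t2 + G * Q2" using Fexp e2 L2_def t2_def Q2_def G_def by simp
    have Fm: "F (mX, mY) = - (c * Lm) + tm + G * Qm" using Fexp Lm_def Qm_def tm_def G_def by simp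
    have trm: "2 * tm = t1 + t2"
      by (simp add: tm_def mX_def t1_def t2_def matrix_scalar_ac scalar_matrix_assoc[symmetric] matrix_add_ldistrib trace_scaleR trace_add)
    have mXY: "mX - mY = (1/2) *\<^sub>R ((X1 - Y1) + (X2 - Y2))"
      by (simp add: mX_def mY_def algebra_simps)
    have key: "2 * (- (c * Lm) + G * Qm) < (- (c * L1) + G * Q1) + (- (c * L2) + G * Q2)"
    proof (cases "X1 = X2")
      case True
      hence "Y1 \<noteq> Y2" using ne e1 e2 by simp
      hence "X1 - Y1 \<noteq> X2 - Y2" using True by simp
      hence "Qm < (Q1 + Q2) / 2" unfolding Qm_def Q1_def Q2_def mXY by (rule quad_mid(2))
      hence "2 * Qm < Q1 + Q2" by (simp add: field_simps)
      hence "G * (2 * Qm) < G * (Q1 + Q2)" using G0 by (rule mult_strict_left_mono)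
      hence h: "2 * (G * Qm) < G * Q1 + G * Q2" by (simp add: distrib_left mult.left_commute)
      have e: "Lm = L1" "L2 = L1" using True by (simp_all add: Lm_def L1_def L2_def mX_def half_self)
      show ?thesis using h unfolding e by argo
    next
      case False
      have "(L1 + L2) / 2 < Lm" unfolding L1_def L2_def Lm_def mX_def by (rule logdet_strict[OF eps X1 X2 False])
      hence "L1 + L2 < 2 * Lm" by (simp add: field_simps)
      hence "c * (L1 + L2) < c * (2 * Lm)" using c by (rule mult_strict_left_mono)
      hence h1: "c * L1 + c * L2 < 2 * (c * Lm)" by (simp add: distrib_left mult.left_commute)
      have "Qm \<le> (Q1 + Q2) / 2" unfolding Qm_def Q1_def Q2_def mXY by (rule quad_mid(1))
      hence "2 * Qm \<le> Q1 + Q2" by (simp add: field_simps)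
      hence "G * (2 * Qm) \<le> G * (Q1 + Q2)" using G0 by (simp add: mult_left_mono)
      hence h2: "2 * (G * Qm) \<le> G * Q1 + G * Q2" by (simp add: distrib_left mult.left_commute)
      show ?thesis using h1 h2 by argo
    qed
    have "2 * F (mX, mY) < F z1 + F z2" using key Fm F1 F2 trm by argo
    thus False using le eqF by argo
  qed
  have "\<exists>!z. z \<in> D \<and> (\<forall>w\<in>D. F z \<le> F w)"
  proof (rule ex1I[of _ z])
    show "z \<in> D \<and> (\<forall>w\<in>D. F z \<le> F w)" using zD zminD by blast
  next
    fix y assume "y \<in> D \<and> (\<forall>w\<in>D. F y \<le> F w)"
    thus "y = z" using uniq zD zminD by blast
  qed
  thus ?thesis unfolding F_def D_def .
qed

end
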